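(* Let $\sum_n x_n$ be an absolutely convergent series in a Banach space $X$, and let $k,j\in\mathbb N$ be such that $x_k=x_{k+1}=\dots=x_{k+2j-2}$. Then $j x_k\in S(E(x_n))$.
   Context: The achievement set of an absolutely convergent series $\sum_n x_n$ is $E(x_n):=\{\sum_{n\in A}x_n:\ A\subset\mathbb N\}$. For a subset $A$ of the additive group $X$, the spectre is $S(A):=\{z\in X:\ \forall_{a\in A}\ (a+z\in A \text{ or } a-z\in A)\}$. *)

theory Defs
  imports "HOL-Analysis.Analysis"
begin

text \<open>For an absolutely convergent series every such subsum exists; we use \<open>infsum\<close>.\<close>
definition achievement_set :: "(nat \<Rightarrow> 'a::banach) \<Rightarrow> 'a set" where
  "achievement_set x = {infsum x A | A. A \<subseteq> (UNIV :: nat set)}"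

definition spectre :: "'a::ab_group_add set \<Rightarrow> 'a set" where
  "spectre A = {z. \<forall>a\<in>A. a + z \<in> A \<or> a - z \<in> A}"

end

theory Submission
  imports Defs
begin

theorem mainTheorem12:
  fixes x :: "nat \<Rightarrow> 'a::banach" and k j :: nat
  assumes "summable (\<lambda>n. norm (x n))"
    and "j \<ge> 1"
    and "\<And>i. i \<le> 2 * j - 2 \<Longrightarrow> x (k + i) = x k"
  shows "of_nat j *\<^sub>R x k \<in> spectre (achievement_set x)"
proof -
  have sU: "x summable_on UNIV" using assms(1) by (rule norm_summable_imp_summable_on)
  have sS: "x summable_on S" for S using summable_on_subset_banach[OF sU] by blast
  define B where "B = {k..<k + (2*j-1)}"
  have xB: "x n = x k" if "n \<in> B" for n
  proof -
    have "n - k \<le> 2*j-2" using that assms(2) unfolding B_def by auto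
    from assms(3)[OF this] show ?thesis using that unfolding B_def by auto
  qed
  have sumC: "infsum x C = of_nat (card C) *\<^sub>R x k" if "C \<subseteq> B" for C
  proof -
    have fC: "finite C" using that finite_subset unfolding B_def by blast
    have "infsum x C = sum x C" using fC by simp
    also have "\<dots> = sum (\<lambda>_. x k) C" using that xB by (intro sum.cong) auto
    finally show ?thesis by (simp add: sum_constant_scaleR)
  qed
  have pre: "{k..<k+c} \<subseteq> B" if "c \<le> 2*j-1" for c using that unfolding B_def by auto
  show ?thesis unfolding spectre_def
  proof (intro CollectI ballI)
    fix a assume "a \<in> achievement_set x"
    then obtain A where a: "a = infsum x A" unfolding achievement_set_def by auto
    define R where "R = A - B"
    define m where "m = card (A \<inter> B)"
    have "A = R \<union> (A \<inter> B)" unfolding R_def by auto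
    hence "a = infsum x R + infsum x (A \<inter> B)" unfolding a
      by (metis infsum_Un_disjoint sS R_def Diff_disjoint inf_commute inf_left_commute inf_bot_right)
    hence a2: "a = infsum x R + of_nat m *\<^sub>R x k" using sumC m_def by auto
    have mle: "m \<le> 2*j-1" unfolding m_def
      by (metis B_def card_atLeastLessThan card_mono finite_atLeastLessThan inf_le2 add_diff_cancel_left')
    have RD: "infsum x (R \<union> {k..<k+c}) = infsum x R + of_nat c *\<^sub>R x k" if "c \<le> 2*j-1" for c
    proof -
      have "R \<inter> {k..<k+c} = {}" using pre[OF that] unfolding R_def by auto
      hence "infsum x (R \<union> {k..<k+c}) = infsum x R + infsum x {k..<k+c}"
        using infsum_Un_disjoint sS by blast
      thus ?thesis using sumC[OF pre[OF that]] by simp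
    qed
    show "a + of_nat j *\<^sub>R x k \<in> achievement_set x \<or> a - of_nat j *\<^sub>R x k \<in> achievement_set x"
    proof (cases "m < j")
      case True
      hence "infsum x (R \<union> {k..<k+(m+j)}) = a + of_nat j *\<^sub>R x k"
        using RD[of "m+j"] a2 by (simp add: scaleR_add_left)
      hence "a + of_nat j *\<^sub>R x k \<in> achievement_set x" unfolding achievement_set_def
        by (intro CollectI exI[of _ "R \<union> {k..<k+(m+j)}"]) auto
      thus ?thesis by blast
    next
      case False
      hence "infsum x (R \<union> {k..<k+(m-j)}) = a - of_nat j *\<^sub>R x k"
        using RD[of "m-j"] a2 mle by (simp add: of_nat_diff scaleR_diff_left)
      hence "a - of_nat j *\<^sub>R x k \<in> achievement_set x" unfolding achievement_set_def
        by (intro CollectI exI[of _ "R \<union> {k..<k+(m-j)}"]) auto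
      thus ?thesis by blast
    qed
  qed
qed

end
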